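(* Let $q$ be a prime power and $1\le s<t<k$ integers. If there exists a linear AOA$(s,t,k,q)$, then there exists a linear AOA$(k-t,k-s,k,q)$.
   Context: An orthogonal array OA$(t,k,v)$ (with $1\le t\le k$) is a $v^t\times k$ array with entries from a set $X$ of size $v$ such that, for every choice of $t$ of its columns, each $t$-tuple in $X^t$ appears exactly once as a row of the corresponding $v^t\times t$ subarray. For integers $1\le s\le t\le k$, an augmented orthogonal array AOA$(s,t,k,v)$ is a $v^t\times(k+1)$ array $A$ such that: (1) the first $k$ columns of $A$ form an OA$(t,k,v)$ on a symbol set $X$ of size $v$; (2) the last column of $A$ has entries from a set $Y$ of size $v^{t-s}$; (3) for any choice of $s$ of the first $k$ columns, these $s$ columns together with the last column contain every $(s+1)$-tuple of $X^s\times Y$ exactly once as a row. For a prime power $q$, an AOA$(s,t,k,q)$ is linear if $X=\mathbb{F}_q$, $Y=\mathbb{F}_q^{t-s}$, and its set of rows, regarded as vectors in $\mathbb{F}_q^{k}\times\mathbb{F}_q^{t-s}=\mathbb{F}_q^{k+t-s}$, is an $\mathbb{F}_q$-linear subspace. *)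

theory Defs
  imports "HOL-Library.FuncSet"
begin

text \<open>A row of an AOA(s,t,k,q) (linear case) is a vector of length k + (t - s):
  coordinates 0..k-1 are the first k columns (entries in F_q), coordinates
  k..k+(t-s)-1 together form the last column (an element of F_q^(t-s)).
  The array is represented by its set of rows (rows of an OA with t \<le> k are distinct).\<close>

definition proj_cols :: "nat set \<Rightarrow> 'a list \<Rightarrow> (nat \<Rightarrow> 'a)" where
  "proj_cols C r = restrict (\<lambda>i. r ! i) C"

definition is_lin_subspace :: "nat \<Rightarrow> ('a::field) list set \<Rightarrow> bool" where
  "is_lin_subspace n S \<longleftrightarrow>
     (\<forall>x\<in>S. length x = n) \<and> replicate n 0 \<in> S \<and>
     (\<forall>x\<in>S. \<forall>y\<in>S. map2 (+) x y \<in> S) \<and>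
     (\<forall>c. \<forall>x\<in>S. map ((*) c) x \<in> S)"

definition linear_AOA :: "nat \<Rightarrow> nat \<Rightarrow> nat \<Rightarrow> ('a::{field,finite}) list set \<Rightarrow> bool" where
  "linear_AOA s t k S \<longleftrightarrow>
     1 \<le> s \<and> s \<le> t \<and> t \<le> k \<and>
     is_lin_subspace (k + (t - s)) S \<and>
     (\<forall>C. C \<subseteq> {..<k} \<and> card C = t \<longrightarrow>
        bij_betw (proj_cols C) S (C \<rightarrow>\<^sub>E (UNIV :: 'a set))) \<and>
     (\<forall>C. C \<subseteq> {..<k} \<and> card C = s \<longrightarrow>
        bij_betw (proj_cols (C \<union> {k..<k + (t - s)})) S
                 ((C \<union> {k..<k + (t - s)}) \<rightarrow>\<^sub>E (UNIV :: 'a set)))"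

end

theory Submission
  imports Defs
begin

definition dotp :: "nat \<Rightarrow> ('a::field) list \<Rightarrow> 'a list \<Rightarrow> 'a" where
  "dotp n x y = (\<Sum>m<n. x ! m * y ! m)"

definition perp :: "nat \<Rightarrow> ('a::field) list set \<Rightarrow> 'a list set" where
  "perp n S = {y. length y = n \<and> (\<forall>c\<in>S. dotp n y c = 0)}"

lemma lincomb_in:
  fixes S :: "('a::field) list set"
  assumes sub: "is_lin_subspace n S" and fin: "finite A"
  shows "(\<forall>a\<in>A. v a \<in> S) \<Longrightarrow> map (\<lambda>j. \<Sum>a\<in>A. f a * v a ! j) [0..<n] \<in> S"
  using fin
proof (induction A rule: finite_induct)
  case empty
  have "map (\<lambda>j. \<Sum>a\<in>{}. f a * v a ! j) [0..<n] = replicate n 0"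
    by (simp add: map_replicate_const)
  then show ?case using sub unfolding is_lin_subspace_def by simp
next
  case (insert x F)
  let ?p = "map (\<lambda>j. \<Sum>a\<in>F. f a * v a ! j) [0..<n]"
  have p: "?p \<in> S" using insert by auto
  have vx: "v x \<in> S" using insert by auto
  have lx: "length (v x) = n" using vx sub unfolding is_lin_subspace_def by auto
  have sx: "map ((*) (f x)) (v x) \<in> S" using vx sub unfolding is_lin_subspace_def by auto
  have "map2 (+) (map ((*) (f x)) (v x)) ?p \<in> S"
    using sx p sub unfolding is_lin_subspace_def by blast
  moreover have "map2 (+) (map ((*) (f x)) (v x)) ?p
      = map (\<lambda>j. \<Sum>a\<in>insert x F. f a * v a ! j) [0..<n]"
    by (rule nth_equalityI) (auto simp: lx insert.hyps)
  ultimately show ?case by simp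
qed

lemma key:
  fixes S :: "('a::field) list set"
  assumes sub: "is_lin_subspace n S" and IS: "I \<subseteq> {..<n}"
    and bij: "bij_betw (proj_cols I) S (I \<rightarrow>\<^sub>E (UNIV :: 'a set))"
  shows "bij_betw (proj_cols ({..<n} - I)) (perp n S) (({..<n} - I) \<rightarrow>\<^sub>E (UNIV :: 'a set))"
proof -
  define J where "J = {..<n} - I"
  have finI: "finite I" using IS finite_subset by blast
  have finJ: "finite J" unfolding J_def by simp
  have disj: "I \<inter> J = {}" and un: "I \<union> J = {..<n}" using IS unfolding J_def by auto
  have lenS: "\<And>c. c \<in> S \<Longrightarrow> length c = n" using sub unfolding is_lin_subspace_def by auto
  define e where "e i = restrict (\<lambda>i'. if i' = i then (1::'a) else 0) I" for i
  define b where "b i = inv_into S (proj_cols I) (e i)" for i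
  have e_in: "e i \<in> I \<rightarrow>\<^sub>E UNIV" for i unfolding e_def by auto
  have bS: "b i \<in> S" for i
    using bij e_in[of i] unfolding b_def bij_betw_def by (metis inv_into_into)
  have pb: "proj_cols I (b i) = e i" for i
    using bij e_in[of i] unfolding b_def bij_betw_def by (metis f_inv_into_f)
  have bval: "b i ! i' = (if i' = i then 1 else 0)" if "i' \<in> I" for i i'
  proof -
    have "proj_cols I (b i) i' = e i i'" using pb by simp
    then show ?thesis using that unfolding proj_cols_def e_def by simp
  qed
  have inj: "inj_on (proj_cols I) S" using bij bij_betw_def by blast
  have span: "c ! j = (\<Sum>i\<in>I. c ! i * b i ! j)" if c: "c \<in> S" and j: "j < n" for c j
  proof -
    define d where "d = map (\<lambda>j. \<Sum>i\<in>I. c ! i * b i ! j) [0..<n]"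
    have dS: "d \<in> S" unfolding d_def using lincomb_in[OF sub finI] bS by blast
    have "proj_cols I d = proj_cols I c"
    proof
      fix x show "proj_cols I d x = proj_cols I c x"
      proof (cases "x \<in> I")
        case True
        then have xn: "x < n" using IS by auto
        have "d ! x = (\<Sum>i\<in>I. c ! i * b i ! x)" unfolding d_def using xn by simp
        also have "\<dots> = (\<Sum>i\<in>I. if i = x then c ! i else 0)"
          by (rule sum.cong) (auto simp: bval True)
        also have "\<dots> = c ! x" using True finI by simp
        finally show ?thesis unfolding proj_cols_def using True by simp
      qed (simp add: proj_cols_def)
    qed
    then have "d = c" using inj dS c inj_on_def by metis
    then show ?thesis unfolding d_def using j by (metis (no_types, lifting) add_0 diff_zero length_upt nth_map nth_upt)
  qed
  have splitsum: "(\<Sum>m<n. g m) = (\<Sum>m\<in>I. g m) + (\<Sum>m\<in>J. g m)" for g :: "nat \<Rightarrow> 'a"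
    using sum.union_disjoint[OF finI finJ disj, of g] un by simp
  show ?thesis unfolding J_def[symmetric]
  proof (rule bij_betwI')
    fix y y' assume y: "y \<in> perp n S" and y': "y' \<in> perp n S"
    have ly: "length y = n" and ly': "length y' = n" using y y' unfolding perp_def by auto
    show "(proj_cols J y = proj_cols J y') = (y = y')"
    proof
      assume eq: "proj_cols J y = proj_cols J y'"
      have eqJ: "y ! j = y' ! j" if "j \<in> J" for j
        using fun_cong[OF eq, of j] that unfolding proj_cols_def by simp
      have dotb: "dotp n z (b i) = z ! i + (\<Sum>j\<in>J. z ! j * b i ! j)" if "i \<in> I" for z i
      proof -
        have "dotp n z (b i) = (\<Sum>m\<in>I. z ! m * b i ! m) + (\<Sum>j\<in>J. z ! j * b i ! j)"
          unfolding dotp_def by (rule splitsum)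
        also have "(\<Sum>m\<in>I. z ! m * b i ! m) = (\<Sum>m\<in>I. if m = i then z ! m else 0)"
          by (rule sum.cong) (auto simp: bval)
        also have "\<dots> = z ! i" using that finI by simp
        finally show ?thesis .
      qed
      have eqI: "y ! i = y' ! i" if i: "i \<in> I" for i
      proof -
        have "dotp n y (b i) = 0" "dotp n y' (b i) = 0" using y y' bS unfolding perp_def by auto
        moreover have "(\<Sum>j\<in>J. y ! j * b i ! j) = (\<Sum>j\<in>J. y' ! j * b i ! j)"
          using eqJ by simp
        ultimately show ?thesis using dotb[OF i, of y] dotb[OF i, of y'] by (metis add_right_cancel)
      qed
      show "y = y'"
      proof (rule nth_equalityI)
        show "length y = length y'" using ly ly' by simp
        fix m assume "m < length y"
        then have "m \<in> I \<union> J" using un ly by auto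
        then show "y ! m = y' ! m" using eqI eqJ by auto
      qed
    qed simp
  next
    fix y assume y: "y \<in> perp n S"
    show "proj_cols J y \<in> J \<rightarrow>\<^sub>E UNIV" unfolding proj_cols_def by simp
  next
    fix z :: "nat \<Rightarrow> 'a" assume z: "z \<in> J \<rightarrow>\<^sub>E UNIV"
    define y where "y = map (\<lambda>m. if m \<in> J then z m else - (\<Sum>j\<in>J. z j * b m ! j)) [0..<n]"
    have ly: "length y = n" unfolding y_def by simp
    have yn: "y ! m = (if m \<in> J then z m else - (\<Sum>j\<in>J. z j * b m ! j))" if "m < n" for m
      unfolding y_def using that by simp
    have "dotp n y c = 0" if c: "c \<in> S" for c
    proof -
      have "dotp n y c = (\<Sum>m\<in>I. y ! m * c ! m) + (\<Sum>m\<in>J. y ! m * c ! m)"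
        unfolding dotp_def by (rule splitsum)
      also have "(\<Sum>m\<in>I. y ! m * c ! m) = (\<Sum>m\<in>I. - (\<Sum>j\<in>J. z j * b m ! j) * c ! m)"
      proof (rule sum.cong)
        fix m assume m: "m \<in> I"
        then have "m < n" "m \<notin> J" using IS disj by auto
        then show "y ! m * c ! m = - (\<Sum>j\<in>J. z j * b m ! j) * c ! m" using yn by simp
      qed simp
      also have "\<dots> = - (\<Sum>m\<in>I. \<Sum>j\<in>J. z j * (c ! m * b m ! j))"
      proof -
        have "(\<Sum>m\<in>I. - (\<Sum>j\<in>J. z j * b m ! j) * c ! m) = (\<Sum>m\<in>I. - (c ! m * (\<Sum>j\<in>J. z j * b m ! j)))"
          by (rule sum.cong) (simp_all add: mult.commute[of "c ! _"])
        also have "\<dots> = - (\<Sum>m\<in>I. c ! m * (\<Sum>j\<in>J. z j * b m ! j))"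
          by (rule sum_negf)
        also have "(\<Sum>m\<in>I. c ! m * (\<Sum>j\<in>J. z j * b m ! j)) = (\<Sum>m\<in>I. \<Sum>j\<in>J. z j * (c ! m * b m ! j))"
          by (rule sum.cong) (simp_all only: sum_distrib_left mult.left_commute)
        finally show ?thesis .
      qed
      also have "(\<Sum>m\<in>J. y ! m * c ! m) = (\<Sum>j\<in>J. z j * (\<Sum>i\<in>I. c ! i * b i ! j))"
      proof (rule sum.cong)
        fix m assume m: "m \<in> J"
        then have mn: "m < n" unfolding J_def by auto
        have "y ! m = z m" using yn[OF mn] m by simp
        moreover have "c ! m = (\<Sum>i\<in>I. c ! i * b i ! m)" by (rule span[OF c mn])
        ultimately show "y ! m * c ! m = z m * (\<Sum>i\<in>I. c ! i * b i ! m)" by simp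
      qed simp
      also have "\<dots> = (\<Sum>j\<in>J. \<Sum>i\<in>I. z j * (c ! i * b i ! j))"
        by (simp add: sum_distrib_left)
      also have "\<dots> = (\<Sum>i\<in>I. \<Sum>j\<in>J. z j * (c ! i * b i ! j))"
        by (rule sum.swap)
      finally show ?thesis by (simp only: add.left_inverse)
    qed
    then have yp: "y \<in> perp n S" unfolding perp_def using ly by simp
    have "proj_cols J y = z"
    proof
      fix x show "proj_cols J y x = z x"
      proof (cases "x \<in> J")
        case True then have "x < n" unfolding J_def by auto
        then show ?thesis using True yn unfolding proj_cols_def by simp
      next
        case False then show ?thesis using z unfolding proj_cols_def by auto
      qed
    qed
    then show "\<exists>y\<in>perp n S. z = proj_cols J y" using yp by auto
  qed
qed

theorem theorem3p5:
  fixes s t k :: nat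
  assumes "1 \<le> s" and "s < t" and "t < k"
    and "\<exists>S :: ('a::{field,finite}) list set. linear_AOA s t k S"
  shows "\<exists>S :: 'a list set. linear_AOA (k - t) (k - s) k S"
proof -
  obtain S :: "'a list set" where S: "linear_AOA s t k S" using assms(4) by blast
  define n where "n = k + (t - s)"
  have nn: "k + ((k - s) - (k - t)) = n" unfolding n_def using assms by simp
  have sub: "is_lin_subspace n S" using S unfolding linear_AOA_def n_def by blast
  have c1: "\<And>C. C \<subseteq> {..<k} \<Longrightarrow> card C = t \<Longrightarrow>
        bij_betw (proj_cols C) S (C \<rightarrow>\<^sub>E (UNIV :: 'a set))"
    using S unfolding linear_AOA_def by blast
  have c2: "\<And>C. C \<subseteq> {..<k} \<Longrightarrow> card C = s \<Longrightarrow>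
        bij_betw (proj_cols (C \<union> {k..<n})) S ((C \<union> {k..<n}) \<rightarrow>\<^sub>E (UNIV :: 'a set))"
    using S unfolding linear_AOA_def n_def by blast
  have lenS: "\<And>c. c \<in> S \<Longrightarrow> length c = n" using sub unfolding is_lin_subspace_def by auto
  have "is_lin_subspace n (perp n S)"
    unfolding is_lin_subspace_def
  proof (intro conjI ballI allI)
    show "replicate n 0 \<in> perp n S" unfolding perp_def dotp_def by simp
  next
    fix x y assume x: "x \<in> perp n S" and y: "y \<in> perp n S"
    then have lx: "length x = n" and ly: "length y = n" unfolding perp_def by auto
    show "map2 (+) x y \<in> perp n S" unfolding perp_def
    proof (intro CollectI conjI ballI)
      show "length (map2 (+) x y) = n" using lx ly by simp
      fix c assume c: "c \<in> S"
      have "dotp n (map2 (+) x y) c = dotp n x c + dotp n y c"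
        unfolding dotp_def using lx ly by (simp add: sum.distrib distrib_right)
      then show "dotp n (map2 (+) x y) c = 0" using x y c unfolding perp_def by simp
    qed
  next
    fix a :: 'a and x assume x: "x \<in> perp n S"
    then have lx: "length x = n" unfolding perp_def by auto
    show "map ((*) a) x \<in> perp n S" unfolding perp_def
    proof (intro CollectI conjI ballI)
      show "length (map ((*) a) x) = n" using lx by simp
      fix c assume c: "c \<in> S"
      have "dotp n (map ((*) a) x) c = a * dotp n x c"
        unfolding dotp_def using lx by (simp add: sum_distrib_left mult.assoc)
      then show "dotp n (map ((*) a) x) c = 0" using x c unfolding perp_def by simp
    qed
  qed (auto simp: perp_def)
  moreover have "bij_betw (proj_cols C) (perp n S) (C \<rightarrow>\<^sub>E (UNIV :: 'a set))"
    if C: "C \<subseteq> {..<k}" "card C = k - s" for C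
  proof -
    let ?I = "({..<k} - C) \<union> {k..<n}"
    have cd: "card ({..<k} - C) = s" using C card_Diff_subset[of C "{..<k}"] finite_subset assms
      by (metis card_lessThan diff_diff_cancel finite_lessThan less_imp_le_nat order.strict_trans)
    have b: "bij_betw (proj_cols ?I) S (?I \<rightarrow>\<^sub>E UNIV)" using c2[of "{..<k} - C"] cd by blast
    have I: "?I \<subseteq> {..<n}" unfolding n_def by auto
    have "{..<n} - ?I = C" using C unfolding n_def by auto
    then show ?thesis using key[OF sub I b] by simp
  qed
  moreover have "bij_betw (proj_cols (C \<union> {k..<n})) (perp n S) ((C \<union> {k..<n}) \<rightarrow>\<^sub>E (UNIV :: 'a set))"
    if C: "C \<subseteq> {..<k}" "card C = k - t" for C
  proof -
    let ?I = "{..<k} - C"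
    have cd: "card ?I = t" using C card_Diff_subset[of C "{..<k}"] finite_subset assms
      by (metis card_lessThan diff_diff_cancel finite_lessThan less_imp_le_nat)
    have b: "bij_betw (proj_cols ?I) S (?I \<rightarrow>\<^sub>E UNIV)" using c1[of ?I] cd by blast
    have I: "?I \<subseteq> {..<n}" unfolding n_def by auto
    have "{..<n} - ?I = C \<union> {k..<n}" using C unfolding n_def by auto
    then show ?thesis using key[OF sub I b] by simp
  qed
  ultimately have "linear_AOA (k - t) (k - s) k (perp n S)"
    unfolding linear_AOA_def nn using assms by auto
  then show ?thesis by blast
qed

end
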